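(* Let $\Omega\in\mathbb{R}^{n\times n}$ be a DCBM Bernoulli probability matrix, i.e. $\Omega=\Theta\Pi P\Pi'\Theta$ for some $\Theta=\mathrm{diag}(\theta)$ with $\theta\in(0,\infty)^n$, some membership matrix $\Pi$ whose $K$ community fractions $h_1,\dots,h_K$ are all positive, and some symmetric nonnegative $P\in\mathbb{R}^{K\times K}$, and suppose $\Omega$ has strictly positive diagonal entries. Then there exist $(\Theta,\Pi,P)$ (with $\Pi$ unchanged) such that $\Omega=\Theta\Pi P\Pi'\Theta$ and $$\|\theta\|_1=n,\qquad Ph\propto \mathbf{1}_K,\quad h=(h_1,\dots,h_K)'.$$ Moreover, for fixed $\Pi$, any two pairs $(\Theta,P)$ satisfying $\Omega=\Theta\Pi P\Pi'\Theta$ together with these two conditions are equal.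
   Context: Degree-corrected block model (DCBM): an $n$-node network with $K$ communities $\mathcal{C}_1,\dots,\mathcal{C}_K$ partitioning $\{1,\dots,n\}$; $\theta=(\theta_1,\dots,\theta_n)'$ with $\theta_i>0$, $\Theta=\mathrm{diag}(\theta)$; $\Pi=[\pi_1,\dots,\pi_n]'\in\{0,1\}^{n\times K}$ with $\pi_i=e_k$ iff $i\in\mathcal{C}_k$; $P\in\mathbb{R}^{K\times K}$ symmetric with nonnegative entries; $\Omega=\Theta\Pi P\Pi'\Theta$. $h_k=|\mathcal{C}_k|/n$ is the fraction of nodes in community $k$. $Ph\propto\mathbf{1}_K$ means $Ph=t\mathbf{1}_K$ for some scalar $t>0$. *)

theory Defs
  imports "Jordan_Normal_Form.Matrix"
begin

definition membership_mat :: "nat \<Rightarrow> nat \<Rightarrow> real mat \<Rightarrow> bool" where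
  "membership_mat n K Pm \<longleftrightarrow> Pm \<in> carrier_mat n K
     \<and> (\<forall>i<n. \<forall>k<K. Pm $$ (i,k) = 0 \<or> Pm $$ (i,k) = 1)
     \<and> (\<forall>i<n. \<exists>!k. k < K \<and> Pm $$ (i,k) = 1)"

definition comm_frac :: "real mat \<Rightarrow> real vec" where
  "comm_frac Pm = vec (dim_col Pm)
     (\<lambda>k. real (card {i. i < dim_row Pm \<and> Pm $$ (i,k) = 1}) / real (dim_row Pm))"

definition Theta_mat :: "real vec \<Rightarrow> real mat" where
  "Theta_mat \<theta> = mat (dim_vec \<theta>) (dim_vec \<theta>) (\<lambda>(i,j). if i = j then \<theta> $ i else 0)"

definition dcbm_Omega :: "real vec \<Rightarrow> real mat \<Rightarrow> real mat \<Rightarrow> real mat" where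
  "dcbm_Omega \<theta> Pm P = Theta_mat \<theta> * Pm * P * transpose_mat Pm * Theta_mat \<theta>"

definition dcbm_params :: "nat \<Rightarrow> nat \<Rightarrow> real vec \<Rightarrow> real mat \<Rightarrow> bool" where
  "dcbm_params n K \<theta> P \<longleftrightarrow> \<theta> \<in> carrier_vec n \<and> (\<forall>i<n. \<theta> $ i > 0)
     \<and> P \<in> carrier_mat K K \<and> transpose_mat P = P \<and> (\<forall>k<K. \<forall>l<K. P $$ (k,l) \<ge> 0)"

definition dcbm_normalized :: "nat \<Rightarrow> nat \<Rightarrow> real vec \<Rightarrow> real mat \<Rightarrow> real mat \<Rightarrow> bool" where
  "dcbm_normalized n K \<theta> Pm P \<longleftrightarrow> (\<Sum>i<n. \<bar>\<theta> $ i\<bar>) = real n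
     \<and> (\<exists>t>0. P *\<^sub>v comm_frac Pm = t \<cdot>\<^sub>v vec K (\<lambda>_. 1))"

end

theory Submission
  imports Defs "HOL-Analysis.Function_Topology"
begin


lemma lagrange_id:
  fixes a v :: "nat \<Rightarrow> real"
  assumes "finite S" "\<forall>l\<in>S. v l > 0"
  shows "(\<Sum>l\<in>S. \<Sum>m\<in>S. a l * a m * (v l - v m)^2 / (v l * v m))
       = 2 * ((\<Sum>l\<in>S. a l * v l) * (\<Sum>m\<in>S. a m / v m) - (\<Sum>l\<in>S. a l)^2)"
proof -
  have t: "a l * a m * (v l - v m)^2 / (v l * v m) = (a l * v l) * (a m / v m) + (a m * v m) * (a l / v l) - 2 * (a l * a m)"
    if "l \<in> S" "m \<in> S" for l m
  proof -
    have "v l \<noteq> 0" "v m \<noteq> 0" using assms that by auto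
    then show ?thesis by (simp add: field_simps power2_eq_square)
  qed
  have "(\<Sum>l\<in>S. \<Sum>m\<in>S. a l * a m * (v l - v m)^2 / (v l * v m))
     = (\<Sum>l\<in>S. \<Sum>m\<in>S. (a l * v l) * (a m / v m)) + (\<Sum>l\<in>S. \<Sum>m\<in>S. (a m * v m) * (a l / v l))
       - 2 * (\<Sum>l\<in>S. \<Sum>m\<in>S. a l * a m)"
    by (simp add: t sum.distrib sum_subtractf sum_distrib_left)
  also have "(\<Sum>l\<in>S. \<Sum>m\<in>S. (a m * v m) * (a l / v l)) = (\<Sum>l\<in>S. \<Sum>m\<in>S. (a l * v l) * (a m / v m))"
    by (rule sum.swap)
  finally show ?thesis
    by (simp add: sum_product power2_eq_square)
qed

lemma uniq_core:
  fixes h v :: "nat \<Rightarrow> real" and P :: "nat \<Rightarrow> nat \<Rightarrow> real"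
  assumes hpos: "\<forall>k<K. h k > 0"
    and Pnn: "\<forall>k<K. \<forall>l<K. P k l \<ge> 0"
    and Psym: "\<forall>k<K. \<forall>l<K. P k l = P l k"
    and Pdiag: "\<forall>k<K. P k k > 0"
    and tpos: "t > 0"
    and rows: "\<forall>k<K. (\<Sum>l<K. P k l * h l) = t"
    and vpos: "\<forall>k<K. v k > 0"
    and eq: "\<forall>k<K. v k * (\<Sum>l<K. P k l * h l * v l) = d"
  shows "\<forall>k<K. v k ^ 2 * t = d"
proof (intro allI impI)
  fix k0 assume k0: "k0 < K"
  define Av where "Av k = (\<Sum>l<K. P k l * h l * v l)" for k
  define Bv where "Bv k = (\<Sum>l<K. P k l * h l / v l)" for k
  define D where "D k = (\<Sum>l<K. \<Sum>m<K. (P k l * h l) * (P k m * h m) * (v l - v m)^2 / (v l * v m))" for k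
  have Dnn: "\<And>k l m. k < K \<Longrightarrow> l < K \<Longrightarrow> m < K \<Longrightarrow>
      (P k l * h l) * (P k m * h m) * (v l - v m)^2 / (v l * v m) \<ge> 0"
    using Pnn hpos vpos by (intro divide_nonneg_pos mult_nonneg_nonneg) (auto intro: less_imp_le)
  have D0: "D k \<ge> 0" if "k < K" for k
    unfolding D_def using Dnn that by (intro sum_nonneg) auto
  have Did: "D k = 2 * (Av k * Bv k - t^2)" if "k < K" for k
  proof -
    have "D k = 2 * ((\<Sum>l<K. (P k l * h l) * v l) * (\<Sum>m<K. (P k m * h m) / v m) - (\<Sum>l<K. P k l * h l)^2)"
      unfolding D_def by (rule lagrange_id) (use vpos in auto)
    then show ?thesis using rows that by (simp add: Av_def Bv_def)
  qed
  have Avpos: "Av k > 0" if "k < K" for k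
  proof -
    have pos: "0 < P k k * h k * v k" using that Pdiag hpos vpos by simp
    have nn: "0 \<le> P k l * h l * v l" if "l < K" for l
      using \<open>k < K\<close> that Pnn hpos vpos by (meson less_imp_le mult_nonneg_nonneg)
    have "P k k * h k * v k \<le> Av k" unfolding Av_def
      using that nn by (intro member_le_sum) auto
    then show ?thesis using pos by linarith
  qed
  have dpos: "d > 0" using eq Avpos vpos k0 by (metis Av_def mult_pos_pos)
  have Av_eq: "Av k = d / v k" if "k < K" for k
  proof -
    have "v k * Av k = d" "v k > 0" using eq vpos that by (auto simp: Av_def)
    then show ?thesis by (simp add: field_simps)
  qed
  have stat: "(\<Sum>k<K. h k * (P k l * h l * w l)) = t * (h l * w l)" if "l < K" for l and w :: "nat \<Rightarrow> real"
  proof -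
    have "(\<Sum>k<K. h k * (P k l * h l * w l)) = (\<Sum>k<K. P l k * h k) * (h l * w l)"
    proof -
      have "(\<Sum>k<K. h k * (P k l * h l * w l)) = (\<Sum>k<K. (P l k * h k) * (h l * w l))"
        using Psym that by (intro sum.cong) auto
      then show ?thesis by (simp add: sum_distrib_right)
    qed
    then show ?thesis using rows that by simp
  qed
  have S1: "(\<Sum>k<K. h k * Av k) = t * (\<Sum>l<K. h l * v l)"
  proof -
    have "(\<Sum>k<K. h k * Av k) = (\<Sum>k<K. \<Sum>l<K. h k * (P k l * h l * v l))"
      by (simp add: Av_def sum_distrib_left)
    also have "\<dots> = (\<Sum>l<K. \<Sum>k<K. h k * (P k l * h l * v l))" by (rule sum.swap)
    also have "\<dots> = (\<Sum>l<K. t * (h l * v l))" using stat[of _ v] by simp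
    finally show ?thesis by (simp add: sum_distrib_left)
  qed
  have S2: "(\<Sum>k<K. h k * Bv k) = t * (\<Sum>l<K. h l * (1 / v l))"
  proof -
    have "(\<Sum>k<K. h k * Bv k) = (\<Sum>k<K. \<Sum>l<K. h k * (P k l * h l * (1 / v l)))"
      by (simp add: Bv_def sum_distrib_left)
    also have "\<dots> = (\<Sum>l<K. \<Sum>k<K. h k * (P k l * h l * (1 / v l)))" by (rule sum.swap)
    also have "\<dots> = (\<Sum>l<K. t * (h l * (1 / v l)))" using stat[of _ "\<lambda>l. 1 / v l"] by simp
    finally show ?thesis by (simp add: sum_distrib_left)
  qed
  have F1: "d * (\<Sum>k<K. h k * (1 / v k)) = t * (\<Sum>l<K. h l * v l)"
    using S1 Av_eq by (simp add: sum_distrib_left mult.commute)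
  have Bv_eq: "h k * Bv k = t * (t * (h k * v k)) / d + h k * D k * v k / (2 * d)" if "k < K" for k
  proof -
    have "Av k * Bv k = t^2 + D k / 2" using Did[OF that] by (simp add: algebra_simps)
    moreover have "v k > 0" using vpos that by auto
    ultimately have "Bv k = (t^2 + D k / 2) * v k / d" using Av_eq[OF that] dpos
      by (simp add: field_simps)
    then show ?thesis using dpos by (simp only:) (simp add: field_simps power2_eq_square)
  qed
  have "t * (\<Sum>l<K. h l * (1 / v l)) = (\<Sum>k<K. t * (t * (h k * v k)) / d + h k * D k * v k / (2 * d))"
    using S2 Bv_eq by simp
  also have "\<dots> = t * (t * (\<Sum>k<K. h k * v k)) / d + (\<Sum>k<K. h k * D k * v k) / (2 * d)"
    by (simp add: sum.distrib sum_divide_distrib sum_distrib_left)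
  also have "t * (t * (\<Sum>k<K. h k * v k)) / d = t * (\<Sum>l<K. h l * (1 / v l))"
    using F1 dpos by (simp add: field_simps)
  finally have "(\<Sum>k<K. h k * D k * v k) = 0" using dpos by simp
  then have "\<forall>k\<in>{..<K}. h k * D k * v k = 0"
    by (subst sum_nonneg_eq_0_iff[symmetric]) (use hpos vpos D0 in \<open>auto intro!: mult_nonneg_nonneg simp: less_imp_le\<close>)
  then have "h k0 * D k0 * v k0 = 0" using k0 by auto
  then have Dk0: "D k0 = 0" using k0 hpos vpos by (metis less_irrefl mult_eq_0_iff)
  have inner: "\<forall>l\<in>{..<K}. (\<Sum>m<K. (P k0 l * h l) * (P k0 m * h m) * (v l - v m)^2 / (v l * v m)) = 0"
    using Dk0 unfolding D_def
    by (subst sum_nonneg_eq_0_iff[symmetric]) (use Dnn k0 in \<open>auto intro!: sum_nonneg\<close>)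
  have eqv: "P k0 l * h l * v l = P k0 l * h l * v k0" if "l < K" for l
  proof -
    have "\<forall>m\<in>{..<K}. (P k0 l * h l) * (P k0 m * h m) * (v l - v m)^2 / (v l * v m) = 0"
      using inner that by (subst sum_nonneg_eq_0_iff[symmetric]) (use Dnn k0 that in auto)
    then have "(P k0 l * h l) * (P k0 k0 * h k0) * (v l - v k0)^2 / (v l * v k0) = 0"
      using k0 by auto
    then have "P k0 l = 0 \<or> v l = v k0" using hpos vpos Pdiag k0 that by auto
    then show ?thesis by auto
  qed
  have "Av k0 = (\<Sum>l<K. P k0 l * h l * v k0)" unfolding Av_def
    using eqv by (intro sum.cong) auto
  also have "\<dots> = (\<Sum>l<K. P k0 l * h l) * v k0" by (simp add: sum_distrib_right)
  finally have "Av k0 = t * v k0" using rows k0 by simp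
  moreover have "v k0 * Av k0 = d" using eq k0 by (simp add: Av_def)
  ultimately show "v k0 ^ 2 * t = d" by (simp add: power2_eq_square algebra_simps)
qed

lemma compact_box:
  fixes a b :: real
  shows "compact {w :: nat \<Rightarrow> real. (\<forall>k<K. a \<le> w k \<and> w k \<le> b) \<and> (\<forall>k\<ge>K. w k = 0)}"
proof -
  have eq: "{w :: nat \<Rightarrow> real. (\<forall>k<K. a \<le> w k \<and> w k \<le> b) \<and> (\<forall>k\<ge>K. w k = 0)}
      = PiE UNIV (\<lambda>k. if k < K then {a..b} else {0})"
    by (auto simp: PiE_iff split: if_splits)
  have "compactin (product_topology (\<lambda>_. euclidean) UNIV) (PiE UNIV (\<lambda>k. if k < K then {a..b} else {0::real}))"
    by (subst compactin_PiE) auto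
  then show ?thesis unfolding eq euclidean_product_topology by simp
qed

lemma cont_coord [continuous_intros]: "continuous_on S (\<lambda>w :: nat \<Rightarrow> real. w k)"
  by (rule continuous_on_subset[OF continuous_on_product_coordinates]) auto

lemma deriv_phi:
  fixes h v :: "nat \<Rightarrow> real" and P :: "nat \<Rightarrow> nat \<Rightarrow> real"
  assumes k0: "k0 < K" and vpos: "\<forall>k<K. v k > 0"
    and Psym: "\<forall>k<K. \<forall>l<K. P k l = P l k"
  shows "((\<lambda>s. (\<Sum>k<K. h k * ln (v k + (if k = k0 then 1 else 0) * (s - v k0)))
      - (\<Sum>k<K. \<Sum>l<K. h k * h l * P k l * (v k + (if k = k0 then 1 else 0) * (s - v k0))
                      * (v l + (if l = k0 then 1 else 0) * (s - v k0))) / 2)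
     has_real_derivative (h k0 / v k0 - h k0 * (\<Sum>l<K. P k0 l * h l * v l))) (at (v k0))"
proof -
  define e where "e k = (if k = k0 then 1 else (0::real))" for k
  have D1: "((\<lambda>s. \<Sum>k<K. h k * ln (v k + e k * (s - v k0))) has_real_derivative
      (\<Sum>k<K. h k * (e k * 1 / v k))) (at (v k0))"
    using vpos by (auto intro!: derivative_eq_intros sum.cong simp: field_simps)
  have D2: "((\<lambda>s. \<Sum>k<K. \<Sum>l<K. h k * h l * P k l * (v k + e k * (s - v k0)) * (v l + e l * (s - v k0)))
      has_real_derivative
      (\<Sum>k<K. \<Sum>l<K. h k * h l * P k l * (e k * v l + v k * e l))) (at (v k0))"
    by (auto intro!: derivative_eq_intros sum.cong simp: algebra_simps)
  have E1: "(\<Sum>k<K. h k * (e k * 1 / v k)) = h k0 / v k0"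
  proof -
    have "(\<lambda>k. h k * (e k * 1 / v k)) = (\<lambda>k. if k = k0 then h k0 / v k0 else 0)"
      by (auto simp: e_def)
    then show ?thesis using k0 by (simp only:) simp
  qed
  have E2: "(\<Sum>k<K. \<Sum>l<K. h k * h l * P k l * (e k * v l + v k * e l)) = 2 * (h k0 * (\<Sum>l<K. P k0 l * h l * v l))"
  proof -
    have "(\<Sum>k<K. \<Sum>l<K. h k * h l * P k l * (e k * v l + v k * e l))
       = (\<Sum>k<K. \<Sum>l<K. e k * (h k * h l * P k l * v l)) + (\<Sum>k<K. \<Sum>l<K. e l * (h k * h l * P k l * v k))"
      by (simp add: sum.distrib algebra_simps)
    also have "(\<Sum>k<K. \<Sum>l<K. e k * (h k * h l * P k l * v l)) = (\<Sum>l<K. h k0 * h l * P k0 l * v l)"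
    proof -
      have "(\<lambda>k. \<Sum>l<K. e k * (h k * h l * P k l * v l)) = (\<lambda>k. if k = k0 then (\<Sum>l<K. h k0 * h l * P k0 l * v l) else 0)"
        by (auto simp: e_def)
      then show ?thesis using k0 by (simp only:) simp
    qed
    also have "(\<Sum>k<K. \<Sum>l<K. e l * (h k * h l * P k l * v k)) = (\<Sum>k<K. h k * h k0 * P k k0 * v k)"
    proof (rule sum.cong[OF refl])
      fix k
      have "(\<lambda>l. e l * (h k * h l * P k l * v k)) = (\<lambda>l. if l = k0 then h k * h k0 * P k k0 * v k else 0)"
        by (auto simp: e_def)
      then show "(\<Sum>l<K. e l * (h k * h l * P k l * v k)) = h k * h k0 * P k k0 * v k"
        using k0 by (simp only:) simp
    qed
    also have "\<dots> = (\<Sum>l<K. h k0 * h l * P k0 l * v l)"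
      using Psym k0 by (intro sum.cong) (auto simp: algebra_simps)
    finally show ?thesis by (simp add: sum_distrib_left algebra_simps)
  qed
  have "((\<lambda>s. (\<Sum>k<K. h k * ln (v k + e k * (s - v k0)))
      - (\<Sum>k<K. \<Sum>l<K. h k * h l * P k l * (v k + e k * (s - v k0)) * (v l + e l * (s - v k0))) / 2)
     has_real_derivative (h k0 / v k0 - h k0 * (\<Sum>l<K. P k0 l * h l * v l))) (at (v k0))"
    using DERIV_diff[OF D1 DERIV_cdivide[OF D2, of 2]] unfolding E1 E2 by simp
  then show ?thesis by (simp add: e_def)
qed

lemma scaling_exists:
  fixes h :: "nat \<Rightarrow> real" and P :: "nat \<Rightarrow> nat \<Rightarrow> real"
  assumes hpos: "\<forall>k<K. h k > 0"
    and Pnn: "\<forall>k<K. \<forall>l<K. P k l \<ge> 0"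
    and Psym: "\<forall>k<K. \<forall>l<K. P k l = P l k"
    and Pdiag: "\<forall>k<K. P k k > 0"
  shows "\<exists>v. (\<forall>k<K. v k > 0) \<and> (\<forall>k<K. v k * (\<Sum>l<K. P k l * h l * v l) = 1)"
proof -
  define \<Phi> where "\<Phi> w = (\<Sum>k<K. h k * ln (w k)) - (\<Sum>k<K. \<Sum>l<K. h k * h l * P k l * w k * w l) / 2"
    for w :: "nat \<Rightarrow> real"
  define \<alpha> where "\<alpha> k = h k^2 * P k k / 2" for k
  define U where "U k = h k^2 / (4 * \<alpha> k)" for k
  define one where "one = (\<lambda>k::nat. if k < K then 1 else (0::real))"
  define C where "C = \<Phi> one - (\<Sum>k<K. U k)"
  define a where "a = Min (insert 1 ((\<lambda>k. exp (-(\<bar>C\<bar>+1)/h k)) ` {..<K}))"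
  define b where "b = Max (insert 1 ((\<lambda>k. (h k + \<bar>C\<bar> + 1)/\<alpha> k) ` {..<K}))"
  define B where "B = {w :: nat \<Rightarrow> real. (\<forall>k<K. a \<le> w k \<and> w k \<le> b) \<and> (\<forall>k\<ge>K. w k = 0)}"
  have apos: "a > 0" unfolding a_def by (subst Min_gr_iff) auto
  have a1: "a \<le> 1" unfolding a_def by (rule Min_le) auto
  have ak: "a \<le> exp (-(\<bar>C\<bar>+1)/h k)" if "k < K" for k
    unfolding a_def using that by (intro Min_le) auto
  have b1: "1 \<le> b" unfolding b_def by (rule Max_ge) auto
  have bk: "(h k + \<bar>C\<bar> + 1)/\<alpha> k \<le> b" if "k < K" for k
    unfolding b_def using that by (intro Max_ge) auto
  have alpha_pos: "\<alpha> k > 0" if "k < K" for k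
    using hpos Pdiag that by (auto simp: \<alpha>_def intro!: mult_pos_pos)
  have gbound: "h k * ln s - \<alpha> k * s^2 \<le> U k" if "k < K" "s > 0" for k s
  proof -
    have "ln s \<le> s - 1" using that by (intro ln_le_minus_one)
    then have ls: "ln s \<le> s" by linarith
    have "h k \<ge> 0" using hpos that by (simp add: less_imp_le)
    then have "h k * ln s \<le> h k * s" using mult_left_mono[OF ls] by blast
    moreover have "h k * s - \<alpha> k * s^2 \<le> U k"
    proof -
      have "0 \<le> (2 * \<alpha> k * s - h k)^2" by simp
      then have "4 * \<alpha> k * (h k * s - \<alpha> k * s^2) \<le> h k ^ 2"
        by (simp add: power2_eq_square algebra_simps)
      then show ?thesis using alpha_pos[OF that(1)] unfolding U_def
        by (simp add: field_simps)
    qed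
    ultimately show ?thesis by linarith
  qed
  have U0: "U k \<ge> 0" if "k < K" for k
    using alpha_pos[OF that] unfolding U_def by simp
  have Phi_bound: "\<Phi> w \<le> h k0 * ln (w k0) - \<alpha> k0 * (w k0)^2 + (\<Sum>k<K. U k)"
    if wpos: "\<forall>k<K. w k > 0" and k0: "k0 < K" for w k0
  proof -
    define G where "G k = h k * ln (w k) - \<alpha> k * (w k)^2" for k
    have Qge: "(\<Sum>k<K. h k^2 * P k k * (w k)^2) \<le> (\<Sum>k<K. \<Sum>l<K. h k * h l * P k l * w k * w l)"
    proof (rule sum_mono)
      fix k assume k: "k \<in> {..<K}"
      have nn: "0 \<le> h k * h l * P k l * w k * w l" if "l < K" for l
        using k that hpos Pnn wpos by (simp add: less_imp_le)
      have "h k * h k * P k k * w k * w k \<le> (\<Sum>l<K. h k * h l * P k l * w k * w l)"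
        using k nn by (intro member_le_sum[where f = "\<lambda>l. h k * h l * P k l * w k * w l"]) auto
      then show "h k^2 * P k k * (w k)^2 \<le> (\<Sum>l<K. h k * h l * P k l * w k * w l)"
        by (simp add: power2_eq_square algebra_simps)
    qed
    have "\<Phi> w \<le> (\<Sum>k<K. h k * ln (w k)) - (\<Sum>k<K. h k^2 * P k k * (w k)^2) / 2"
      unfolding \<Phi>_def using Qge by simp
    also have "\<dots> = (\<Sum>k<K. G k)"
      by (simp add: G_def \<alpha>_def sum_subtractf sum_divide_distrib algebra_simps)
    also have "(\<Sum>k<K. G k) = (\<Sum>k<K. U k) - (\<Sum>k<K. U k - G k)"
      by (simp add: sum_subtractf)
    also have "U k0 - G k0 \<le> (\<Sum>k<K. U k - G k)"
      using k0 gbound wpos by (intro member_le_sum) (auto simp: G_def)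
    then have "(\<Sum>k<K. U k) - (\<Sum>k<K. U k - G k) \<le> (\<Sum>k<K. U k) - (U k0 - G k0)" by linarith
    also have "\<dots> \<le> G k0 + (\<Sum>k<K. U k)" using U0[OF k0] by linarith
    finally show ?thesis by (simp add: G_def)
  qed
  have gA: "h k * ln a - \<alpha> k * a^2 < C" if "k < K" for k
  proof -
    have "ln a \<le> -(\<bar>C\<bar>+1)/h k" using ak[OF that] apos
      by (metis ln_exp ln_le_cancel_iff exp_gt_zero)
    then have "h k * ln a \<le> -(\<bar>C\<bar>+1)" using hpos that by (simp add: field_simps)
    moreover have "\<alpha> k * a^2 \<ge> 0" using alpha_pos[OF that] by simp
    ultimately show ?thesis by linarith
  qed
  have gB: "h k * ln b - \<alpha> k * b^2 < C" if "k < K" for k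
  proof -
    have "ln b \<le> b - 1" using b1 by (intro ln_le_minus_one) auto
    then have "h k * ln b < h k * b" using hpos that by (simp add: field_simps)
    moreover have "h k + \<bar>C\<bar> + 1 \<le> \<alpha> k * b" using bk[OF that] alpha_pos[OF that]
      by (simp add: field_simps)
    then have "b * (h k + \<bar>C\<bar> + 1) \<le> b * (\<alpha> k * b)" using b1 by (intro mult_left_mono) auto
    then have "h k * b - \<alpha> k * b^2 \<le> - b * (\<bar>C\<bar> + 1)" by (simp add: power2_eq_square algebra_simps)
    moreover have "- b * (\<bar>C\<bar> + 1) \<le> -(\<bar>C\<bar> + 1)" 
    proof -
      have "1 * (\<bar>C\<bar> + 1) \<le> b * (\<bar>C\<bar> + 1)" using b1 by (intro mult_right_mono) auto
      then show ?thesis by simp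
    qed
    ultimately show ?thesis by linarith
  qed
  have oneB: "one \<in> B" using a1 b1 by (auto simp: B_def one_def)
  have compB: "compact B" unfolding B_def by (rule compact_box)
  have Bpos: "w k > 0" if "w \<in> B" "k < K" for w k
  proof -
    have "a \<le> w k" using that by (simp add: B_def)
    then show ?thesis using apos by linarith
  qed
  have contB: "continuous_on B \<Phi>"
    unfolding \<Phi>_def using Bpos by (auto intro!: continuous_intros) (metis less_irrefl)
  obtain v where vB: "v \<in> B" and vmax: "\<forall>w\<in>B. \<Phi> w \<le> \<Phi> v"
    using continuous_attains_sup[OF compB _ contB] oneB by blast
  have vpos: "\<forall>k<K. v k > 0" using Bpos vB by auto
  have Phione: "\<Phi> one = C + (\<Sum>k<K. U k)" by (simp add: C_def)
  have inter: "a < v k \<and> v k < b" if k: "k < K" for k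
  proof -
    have ge: "\<Phi> v \<ge> C + (\<Sum>k<K. U k)" using vmax oneB Phione by auto
    have le: "\<Phi> v \<le> h k * ln (v k) - \<alpha> k * (v k)^2 + (\<Sum>k<K. U k)" by (rule Phi_bound[OF vpos k])
    have "v k \<noteq> a" using ge le gA[OF k] by auto
    moreover have "v k \<noteq> b" using ge le gB[OF k] by auto
    ultimately show ?thesis using vB k by (auto simp: B_def)
  qed
  show ?thesis
  proof (intro exI conjI allI impI)
    fix k0 assume k0: "k0 < K"
    show "v k0 > 0" using vpos k0 by auto
    define dd where "dd = min (v k0 - a) (b - v k0)"
    have dd: "dd > 0" using inter[OF k0] by (simp add: dd_def)
    have loc: "\<forall>y. \<bar>v k0 - y\<bar> < dd \<longrightarrow>
        \<Phi> (\<lambda>k. v k + (if k = k0 then 1 else 0) * (y - v k0)) \<le> \<Phi> (\<lambda>k. v k + (if k = k0 then 1 else 0) * (v k0 - v k0))"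
    proof (intro allI impI)
      fix y assume y: "\<bar>v k0 - y\<bar> < dd"
      have "(\<lambda>k. v k + (if k = k0 then 1 else 0) * (y - v k0)) \<in> B"
        using vB y k0 unfolding B_def dd_def by auto
      then show "\<Phi> (\<lambda>k. v k + (if k = k0 then 1 else 0) * (y - v k0)) \<le> \<Phi> (\<lambda>k. v k + (if k = k0 then 1 else 0) * (v k0 - v k0))"
        using vmax by simp
    qed
    have "h k0 / v k0 - h k0 * (\<Sum>l<K. P k0 l * h l * v l) = 0"
      by (rule DERIV_local_max[OF deriv_phi[OF k0 vpos Psym, of h] dd]) (use loc in \<open>simp only: \<Phi>_def\<close>)
    then have "h k0 * (1 / v k0) = h k0 * (\<Sum>l<K. P k0 l * h l * v l)" by simp
    moreover have "h k0 > 0" "v k0 > 0" using vpos hpos k0 by auto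
    ultimately have "(\<Sum>l<K. P k0 l * h l * v l) = 1 / v k0" by (metis mult_left_cancel order_less_irrefl)
    then show "v k0 * (\<Sum>l<K. P k0 l * h l * v l) = 1"
      using \<open>v k0 > 0\<close> by simp
  qed
qed



definition cm :: "nat \<Rightarrow> real mat \<Rightarrow> nat \<Rightarrow> nat" where
  "cm K Pm i = (THE k. k < K \<and> Pm $$ (i,k) = 1)"

lemma mem_facts1:
  assumes "membership_mat n K Pm" "i < n"
  shows "cm K Pm i < K \<and> Pm $$ (i, cm K Pm i) = 1"
proof -
  have ex: "\<exists>!k. k < K \<and> Pm $$ (i,k) = 1" using assms unfolding membership_mat_def by auto
  show ?thesis unfolding cm_def by (rule theI'[OF ex])
qed

lemma mem_facts3:
  assumes "membership_mat n K Pm" "i < n" "k < K"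
  shows "Pm $$ (i,k) = (if k = cm K Pm i then 1 else 0)"
proof -
  have ex: "\<exists>!k. k < K \<and> Pm $$ (i,k) = 1" using assms unfolding membership_mat_def by auto
  have c: "cm K Pm i < K \<and> Pm $$ (i, cm K Pm i) = 1" using mem_facts1[OF assms(1,2)] .
  have 01: "Pm $$ (i,k) = 0 \<or> Pm $$ (i,k) = 1" using assms unfolding membership_mat_def by auto
  show ?thesis
  proof (cases "k = cm K Pm i")
    case True then show ?thesis using c by simp
  next
    case False
    then have "Pm $$ (i,k) \<noteq> 1" using ex c assms(3) by blast
    then show ?thesis using False 01 by simp
  qed
qed

lemmas mem_facts = mem_facts1[THEN conjunct1] mem_facts1[THEN conjunct2] mem_facts3

lemma sum_delta_l: "finite S \<Longrightarrow> a \<in> S \<Longrightarrow> (\<Sum>m\<in>S. (if a = m then x else 0) * f m) = x * (f a :: real)"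
proof -
  assume "finite S" "a \<in> S"
  have "(\<Sum>m\<in>S. (if a = m then x else 0) * f m) = (\<Sum>m\<in>S. if m = a then x * f a else 0)"
    by (intro sum.cong) auto
  then show ?thesis using \<open>finite S\<close> \<open>a \<in> S\<close> by simp
qed

lemma sum_delta_r: "finite S \<Longrightarrow> a \<in> S \<Longrightarrow> (\<Sum>m\<in>S. f m * (if m = a then x else 0)) = (f a :: real) * x"
proof -
  assume "finite S" "a \<in> S"
  have "(\<Sum>m\<in>S. f m * (if m = a then x else 0)) = (\<Sum>m\<in>S. if m = a then f a * x else 0)"
    by (intro sum.cong) auto
  then show ?thesis using \<open>finite S\<close> \<open>a \<in> S\<close> by simp
qed

lemma omega_carrier:
  assumes "membership_mat n K Pm" "\<theta> \<in> carrier_vec n" "P \<in> carrier_mat K K"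
  shows "dcbm_Omega \<theta> Pm P \<in> carrier_mat n n"
  using assms unfolding dcbm_Omega_def Theta_mat_def membership_mat_def by auto

lemma omega_entry:
  assumes mem: "membership_mat n K Pm" and th: "\<theta> \<in> carrier_vec n" and P: "P \<in> carrier_mat K K"
    and i: "i < n" and j: "j < n"
  shows "dcbm_Omega \<theta> Pm P $$ (i,j) = \<theta> $ i * \<theta> $ j * P $$ (cm K Pm i, cm K Pm j)"
proof -
  have Pm: "Pm \<in> carrier_mat n K" using mem unfolding membership_mat_def by auto
  have T: "Theta_mat \<theta> \<in> carrier_mat n n" using th by (simp add: Theta_mat_def)
  define A1 where "A1 = Theta_mat \<theta> * Pm"
  define A2 where "A2 = A1 * P"
  define A3 where "A3 = A2 * transpose_mat Pm"
  have A1c: "A1 \<in> carrier_mat n K" using T Pm by (simp add: A1_def)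
  have A2c: "A2 \<in> carrier_mat n K" using A1c P by (simp add: A2_def)
  have A3c: "A3 \<in> carrier_mat n n" using A2c Pm by (simp add: A3_def)
  have A1e: "A1 $$ (i',k) = \<theta> $ i' * Pm $$ (i',k)" if "i' < n" "k < K" for i' k
  proof -
    have "A1 $$ (i',k) = (\<Sum>m\<in>{0..<n}. (if i' = m then \<theta> $ i' else 0) * Pm $$ (m,k))"
      unfolding A1_def using that T Pm th
      by (simp add: index_mult_mat scalar_prod_def Theta_mat_def row_def col_def)
    also have "\<dots> = \<theta> $ i' * Pm $$ (i',k)" using that by (intro sum_delta_l) auto
    finally show ?thesis .
  qed
  have A2e: "A2 $$ (i',l) = \<theta> $ i' * P $$ (cm K Pm i', l)" if "i' < n" "l < K" for i' l
  proof -
    have "A2 $$ (i',l) = (\<Sum>k\<in>{0..<K}. A1 $$ (i',k) * P $$ (k,l))"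
      unfolding A2_def using that A1c P by (simp add: index_mult_mat scalar_prod_def)
    also have "\<dots> = (\<Sum>k\<in>{0..<K}. if k = cm K Pm i' then \<theta> $ i' * P $$ (cm K Pm i', l) else 0)"
      using that A1e mem_facts3[OF mem] by (intro sum.cong) auto
    also have "\<dots> = \<theta> $ i' * P $$ (cm K Pm i', l)" using mem_facts1[OF mem that(1)] by simp
    finally show ?thesis .
  qed
  have A3e: "A3 $$ (i',j') = \<theta> $ i' * P $$ (cm K Pm i', cm K Pm j')" if "i' < n" "j' < n" for i' j'
  proof -
    have "A3 $$ (i',j') = (\<Sum>l\<in>{0..<K}. A2 $$ (i',l) * Pm $$ (j',l))"
      unfolding A3_def using that A2c Pm by (simp add: index_mult_mat scalar_prod_def)
    also have "\<dots> = (\<Sum>l\<in>{0..<K}. if l = cm K Pm j' then \<theta> $ i' * P $$ (cm K Pm i', cm K Pm j') else 0)"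
      using that A2e mem_facts3[OF mem] by (intro sum.cong) auto
    also have "\<dots> = \<theta> $ i' * P $$ (cm K Pm i', cm K Pm j')" using mem_facts1[OF mem that(2)] by simp
    finally show ?thesis .
  qed
  have "dcbm_Omega \<theta> Pm P = A3 * Theta_mat \<theta>"
    unfolding dcbm_Omega_def A3_def A2_def A1_def by simp
  also have "(A3 * Theta_mat \<theta>) $$ (i,j) = (\<Sum>m\<in>{0..<n}. A3 $$ (i,m) * (if m = j then \<theta> $ j else 0))"
    using A3c T i j th by (simp add: index_mult_mat scalar_prod_def Theta_mat_def row_def col_def cong: if_cong)
  also have "\<dots> = A3 $$ (i,j) * \<theta> $ j" using j by (intro sum_delta_r) auto
  finally show ?thesis using A3e[OF i j] by simp
qed

lemma comm_frac_entry:
  assumes "membership_mat n K Pm" "k < K"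
  shows "comm_frac Pm $ k = real (card {i. i < n \<and> Pm $$ (i,k) = 1}) / real n"
  using assms unfolding comm_frac_def membership_mat_def by auto

lemma comm_frac_dim:
  assumes "membership_mat n K Pm"
  shows "dim_vec (comm_frac Pm) = K"
  using assms unfolding comm_frac_def membership_mat_def by auto

lemma rep_exists:
  assumes mem: "membership_mat n K Pm" and k: "k < K" and h: "comm_frac Pm $ k > 0"
  shows "\<exists>i<n. cm K Pm i = k"
proof -
  have "{i. i < n \<and> Pm $$ (i,k) = 1} \<noteq> {}"
    using h comm_frac_entry[OF mem k] by (metis card.empty div_0 of_nat_0 less_irrefl)
  then obtain i where i: "i < n" "Pm $$ (i,k) = 1" by auto
  then have "cm K Pm i = k" using mem_facts3[OF mem i(1) k] by (auto split: if_splits)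
  then show ?thesis using i by auto
qed

lemma mult_vec_entry:
  assumes "P \<in> carrier_mat K K" "dim_vec x = K" "k < K"
  shows "(P *\<^sub>v x) $ k = (\<Sum>l<K. P $$ (k,l) * x $ l)"
  using assms by (simp add: scalar_prod_def row_def atLeast0LessThan)

lemma params_facts:
  assumes "dcbm_params n K \<theta> P"
  shows "\<theta> \<in> carrier_vec n" "\<And>i. i < n \<Longrightarrow> \<theta> $ i > 0" "P \<in> carrier_mat K K"
    "\<And>k l. k < K \<Longrightarrow> l < K \<Longrightarrow> P $$ (k,l) = P $$ (l,k)"
    "\<And>k l. k < K \<Longrightarrow> l < K \<Longrightarrow> P $$ (k,l) \<ge> 0"
proof -
  show "\<theta> \<in> carrier_vec n" "\<And>i. i < n \<Longrightarrow> \<theta> $ i > 0" "P \<in> carrier_mat K K"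
    "\<And>k l. k < K \<Longrightarrow> l < K \<Longrightarrow> P $$ (k,l) \<ge> 0"
    using assms unfolding dcbm_params_def by auto
  fix k l assume "k < K" "l < K"
  have PT: "transpose_mat P = P" "P \<in> carrier_mat K K" using assms unfolding dcbm_params_def by auto
  have "transpose_mat P $$ (k,l) = P $$ (l,k)" using \<open>k < K\<close> \<open>l < K\<close> PT(2) by auto
  then show "P $$ (k,l) = P $$ (l,k)" using PT(1) by simp
qed

lemma diag_pos:
  assumes mem: "membership_mat n K Pm" and par: "dcbm_params n K \<theta> P"
    and om: "\<Omega> = dcbm_Omega \<theta> Pm P" and dg: "\<forall>i<n. \<Omega> $$ (i,i) > 0"
    and i: "i < n"
  shows "P $$ (cm K Pm i, cm K Pm i) > 0"
proof -
  have "0 < \<theta> $ i * \<theta> $ i * P $$ (cm K Pm i, cm K Pm i)"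
    using dg i om omega_entry[OF mem params_facts(1,3)[OF par] i i] by metis
  moreover have "\<theta> $ i > 0" using params_facts(2)[OF par i] .
  ultimately show ?thesis by (simp add: zero_less_mult_iff)
qed

theorem lemma1:
  fixes n K :: nat and \<Omega> Pm P :: "real mat" and \<theta> :: "real vec"
  assumes "membership_mat n K Pm"
    and "\<forall>k<K. comm_frac Pm $ k > 0"
    and "dcbm_params n K \<theta> P"
    and "\<Omega> = dcbm_Omega \<theta> Pm P"
    and "\<forall>i<n. \<forall>j<n. \<Omega> $$ (i,j) \<le> 1"
    and "\<forall>i<n. \<Omega> $$ (i,i) > 0"
  shows "(\<exists>\<theta>' P'. dcbm_params n K \<theta>' P' \<and> \<Omega> = dcbm_Omega \<theta>' Pm P'
            \<and> dcbm_normalized n K \<theta>' Pm P')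
       \<and> (\<forall>\<theta>1 P1 \<theta>2 P2.
            dcbm_params n K \<theta>1 P1 \<and> \<Omega> = dcbm_Omega \<theta>1 Pm P1 \<and> dcbm_normalized n K \<theta>1 Pm P1
          \<and> dcbm_params n K \<theta>2 P2 \<and> \<Omega> = dcbm_Omega \<theta>2 Pm P2 \<and> dcbm_normalized n K \<theta>2 Pm P2
          \<longrightarrow> \<theta>1 = \<theta>2 \<and> P1 = P2)"
proof -
  note mem = assms(1) and hp = assms(2) and par = assms(3) and om = assms(4) and dg = assms(6)
  define c where "c = cm K Pm"
  define hv where "hv = comm_frac Pm"
  define h where "h k = hv $ k" for k
  have Pmc: "Pm \<in> carrier_mat n K" using mem unfolding membership_mat_def by auto
  have hdim: "dim_vec hv = K" using comm_frac_dim[OF mem] by (simp add: hv_def)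
  have hpos: "\<forall>k<K. h k > 0" using hp by (simp add: h_def hv_def)
  have cK: "c i < K" if "i < n" for i using mem_facts1[OF mem that] by (simp add: c_def)
  have rep: "\<exists>i<n. c i = k" if "k < K" for k using rep_exists[OF mem that] hp that by (simp add: c_def)
  show ?thesis
  proof (cases "n = 0")
    case True
    have K0: "K = 0"
    proof (rule ccontr)
      assume "K \<noteq> 0"
      then have "comm_frac Pm $ 0 > 0" using hp by auto
      moreover have "comm_frac Pm $ 0 = 0" using comm_frac_entry[OF mem] \<open>K \<noteq> 0\<close> True by simp
      ultimately show False by simp
    qed
    have norm0: "dcbm_normalized n K \<theta>' Pm P'" if "P' \<in> carrier_mat K K" for \<theta>' P'
    proof -
      have "P' *\<^sub>v comm_frac Pm = 1 \<cdot>\<^sub>v vec K (\<lambda>_. 1)"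
        using that K0 by (intro eq_vecI) auto
      then show ?thesis unfolding dcbm_normalized_def using True by (intro conjI exI[of _ 1]) auto
    qed
    show ?thesis
    proof (rule conjI)
      show "\<exists>\<theta>' P'. dcbm_params n K \<theta>' P' \<and> \<Omega> = dcbm_Omega \<theta>' Pm P' \<and> dcbm_normalized n K \<theta>' Pm P'"
        using par om norm0 params_facts(3)[OF par] by blast
    next
      show "\<forall>\<theta>1 P1 \<theta>2 P2.
            dcbm_params n K \<theta>1 P1 \<and> \<Omega> = dcbm_Omega \<theta>1 Pm P1 \<and> dcbm_normalized n K \<theta>1 Pm P1
          \<and> dcbm_params n K \<theta>2 P2 \<and> \<Omega> = dcbm_Omega \<theta>2 Pm P2 \<and> dcbm_normalized n K \<theta>2 Pm P2
          \<longrightarrow> \<theta>1 = \<theta>2 \<and> P1 = P2"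
      proof (intro allI impI)
      fix \<theta>1 P1 \<theta>2 P2
      assume H: "dcbm_params n K \<theta>1 P1 \<and> \<Omega> = dcbm_Omega \<theta>1 Pm P1 \<and> dcbm_normalized n K \<theta>1 Pm P1 \<and>
        dcbm_params n K \<theta>2 P2 \<and> \<Omega> = dcbm_Omega \<theta>2 Pm P2 \<and> dcbm_normalized n K \<theta>2 Pm P2"
      then have "\<theta>1 \<in> carrier_vec n" "\<theta>2 \<in> carrier_vec n" "P1 \<in> carrier_mat K K" "P2 \<in> carrier_mat K K"
        using params_facts by blast+
      then show "\<theta>1 = \<theta>2 \<and> P1 = P2" using True K0 by (auto intro!: eq_vecI eq_matI)
      qed
    qed
  next
    case False
    then have npos: "n > 0" by simp
    have Pdiag_of: "\<forall>k<K. Q $$ (k,k) > 0" if "dcbm_params n K th0 Q" "\<Omega> = dcbm_Omega th0 Pm Q" for th0 Q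
    proof (intro allI impI)
      fix k assume "k < K"
      then obtain i where "i < n" "c i = k" using rep by blast
      then show "Q $$ (k,k) > 0" using diag_pos[OF mem that(1) that(2) dg] unfolding c_def by blast
    qed
    have rows_of: "\<forall>k<K. (\<Sum>l<K. Q $$ (k,l) * h l) = t" if "Q *\<^sub>v hv = t \<cdot>\<^sub>v vec K (\<lambda>_. 1)" "Q \<in> carrier_mat K K" for Q t
    proof (intro allI impI)
      fix k assume k: "k < K"
      have "(Q *\<^sub>v hv) $ k = t" using that(1) k by simp
      then show "(\<Sum>l<K. Q $$ (k,l) * h l) = t" using mult_vec_entry[OF that(2) hdim k] by (simp add: h_def)
    qed
    have thpos: "\<forall>i<n. \<theta> $ i > 0" using params_facts(2)[OF par] by blast
    show ?thesis
    proof (intro conjI)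
      have Pdiag: "\<forall>k<K. P $$ (k,k) > 0" using Pdiag_of[OF par om] .
      obtain v where vpos: "\<forall>k<K. v k > 0" and veq: "\<forall>k<K. v k * (\<Sum>l<K. P $$ (k,l) * h l * v l) = 1"
        using scaling_exists[of K h "\<lambda>k l. P $$ (k,l)"] hpos params_facts(4,5)[OF par] Pdiag by blast
      define s where "s = (\<Sum>i<n. \<theta> $ i / v (c i))"
      have spos: "s > 0" unfolding s_def using npos thpos vpos cK by (intro sum_pos) auto
      define lam where "lam = real n / s"
      have lampos: "lam > 0" using npos spos by (simp add: lam_def)
      define \<theta>' where "\<theta>' = vec n (\<lambda>i. lam * \<theta> $ i / v (c i))"
      define P' where "P' = mat K K (\<lambda>(k,l). P $$ (k,l) * v k * v l / lam^2)"
      have th'c: "\<theta>' \<in> carrier_vec n" by (simp add: \<theta>'_def)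
      have P'c: "P' \<in> carrier_mat K K" by (simp add: P'_def)
      have par': "dcbm_params n K \<theta>' P'"
        unfolding dcbm_params_def
      proof (intro conjI allI impI th'c P'c)
        fix i assume "i < n"
        then show "\<theta>' $ i > 0" using thpos vpos cK lampos by (simp add: \<theta>'_def)
      next
        show "transpose_mat P' = P'"
          using params_facts(4)[OF par] by (intro eq_matI) (auto simp: P'_def)
      next
        fix k l assume "k < K" "l < K"
        then show "P' $$ (k,l) \<ge> 0" using params_facts(5)[OF par] vpos
          by (simp add: P'_def less_imp_le)
      qed
      have om': "\<Omega> = dcbm_Omega \<theta>' Pm P'"
      proof (rule eq_matI)
        have c1: "\<Omega> \<in> carrier_mat n n" using om omega_carrier[OF mem params_facts(1,3)[OF par]] by simp
        have c2: "dcbm_Omega \<theta>' Pm P' \<in> carrier_mat n n" using omega_carrier[OF mem th'c P'c] .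
        show "dim_row \<Omega> = dim_row (dcbm_Omega \<theta>' Pm P')" "dim_col \<Omega> = dim_col (dcbm_Omega \<theta>' Pm P')"
          using c1 c2 by auto
        fix i j assume i: "i < dim_row (dcbm_Omega \<theta>' Pm P')" and j: "j < dim_col (dcbm_Omega \<theta>' Pm P')"
        then have i: "i < n" and j: "j < n" using c2 by auto
        have vi: "v (c i) > 0" "v (c j) > 0" using vpos cK i j by auto
        have "\<Omega> $$ (i,j) = \<theta> $ i * \<theta> $ j * P $$ (c i, c j)"
          using om omega_entry[OF mem params_facts(1,3)[OF par] i j] by (simp add: c_def)
        also have "\<dots> = (lam * \<theta> $ i / v (c i)) * (lam * \<theta> $ j / v (c j)) * (P $$ (c i, c j) * v (c i) * v (c j) / lam^2)"
          using vi lampos by (simp add: field_simps power2_eq_square)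
        also have "\<dots> = dcbm_Omega \<theta>' Pm P' $$ (i,j)"
          using omega_entry[OF mem th'c P'c i j] i j cK by (simp add: \<theta>'_def P'_def c_def)
        finally show "\<Omega> $$ (i,j) = dcbm_Omega \<theta>' Pm P' $$ (i,j)" .
      qed
      have norm': "dcbm_normalized n K \<theta>' Pm P'"
        unfolding dcbm_normalized_def
      proof (intro conjI exI[of _ "1 / lam^2"])
        have "(\<Sum>i<n. \<bar>\<theta>' $ i\<bar>) = (\<Sum>i<n. lam * (\<theta> $ i / v (c i)))"
        proof (rule sum.cong[OF refl])
          fix i assume "i \<in> {..<n}"
          then have "\<theta> $ i > 0" "v (c i) > 0" using thpos vpos cK by auto
          then show "\<bar>\<theta>' $ i\<bar> = lam * (\<theta> $ i / v (c i))" using \<open>i \<in> {..<n}\<close> lampos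
            by (simp add: \<theta>'_def)
        qed
        also have "\<dots> = lam * s" by (simp add: s_def sum_distrib_left)
        also have "\<dots> = real n" using spos by (simp add: lam_def)
        finally show "(\<Sum>i<n. \<bar>\<theta>' $ i\<bar>) = real n" .
        show "1 / lam^2 > 0" using lampos by simp
        show "P' *\<^sub>v comm_frac Pm = (1 / lam^2) \<cdot>\<^sub>v vec K (\<lambda>_. 1)"
        proof (rule eq_vecI)
          show "dim_vec (P' *\<^sub>v comm_frac Pm) = dim_vec ((1 / lam^2) \<cdot>\<^sub>v vec K (\<lambda>_. 1))"
            using P'c by simp
          fix k assume "k < dim_vec ((1 / lam^2) \<cdot>\<^sub>v vec K (\<lambda>_. 1::real))"
          then have k: "k < K" by simp
          have "(P' *\<^sub>v comm_frac Pm) $ k = (\<Sum>l<K. P' $$ (k,l) * h l)"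
            using mult_vec_entry[OF P'c hdim k] by (simp add: h_def hv_def)
          also have "\<dots> = (\<Sum>l<K. (v k / lam^2) * (P $$ (k,l) * h l * v l))"
            using k by (intro sum.cong) (auto simp: P'_def)
          also have "\<dots> = (v k * (\<Sum>l<K. P $$ (k,l) * h l * v l)) / lam^2"
            by (simp add: sum_distrib_left sum_divide_distrib)
          also have "\<dots> = 1 / lam^2" using veq k by simp
          finally show "(P' *\<^sub>v comm_frac Pm) $ k = ((1 / lam^2) \<cdot>\<^sub>v vec K (\<lambda>_. 1)) $ k"
            using k by simp
        qed
      qed
      show "\<exists>\<theta>' P'. dcbm_params n K \<theta>' P' \<and> \<Omega> = dcbm_Omega \<theta>' Pm P' \<and> dcbm_normalized n K \<theta>' Pm P'"
        using par' om' norm' by blast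
    next
      show "\<forall>\<theta>1 P1 \<theta>2 P2.
            dcbm_params n K \<theta>1 P1 \<and> \<Omega> = dcbm_Omega \<theta>1 Pm P1 \<and> dcbm_normalized n K \<theta>1 Pm P1
          \<and> dcbm_params n K \<theta>2 P2 \<and> \<Omega> = dcbm_Omega \<theta>2 Pm P2 \<and> dcbm_normalized n K \<theta>2 Pm P2
          \<longrightarrow> \<theta>1 = \<theta>2 \<and> P1 = P2"
      proof (intro allI impI, elim conjE)
        fix \<theta>1 P1 \<theta>2 P2
        assume par1: "dcbm_params n K \<theta>1 P1" and om1: "\<Omega> = dcbm_Omega \<theta>1 Pm P1"
          and nm1: "dcbm_normalized n K \<theta>1 Pm P1"
          and par2: "dcbm_params n K \<theta>2 P2" and om2: "\<Omega> = dcbm_Omega \<theta>2 Pm P2"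
          and nm2: "dcbm_normalized n K \<theta>2 Pm P2"
        note p1 = params_facts[OF par1] and p2 = params_facts[OF par2]
        have e: "\<theta>1 $ i * \<theta>1 $ j * P1 $$ (c i, c j) = \<theta>2 $ i * \<theta>2 $ j * P2 $$ (c i, c j)"
          if "i < n" "j < n" for i j
          using om1 om2 omega_entry[OF mem p1(1) p1(3) that] omega_entry[OF mem p2(1) p2(3) that]
          by (simp add: c_def)
        have d1: "\<forall>k<K. P1 $$ (k,k) > 0" using Pdiag_of[OF par1 om1] .
        have d2: "\<forall>k<K. P2 $$ (k,k) > 0" using Pdiag_of[OF par2 om2] .
        define v where "v k = sqrt (P2 $$ (k,k) / P1 $$ (k,k))" for k
        have vpos: "\<forall>k<K. v k > 0" using d1 d2 by (simp add: v_def)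
        have thv: "\<theta>1 $ i = v (c i) * \<theta>2 $ i" if i: "i < n" for i
        proof -
          have ci: "c i < K" using cK i .
          have "\<theta>1 $ i ^ 2 * P1 $$ (c i, c i) = \<theta>2 $ i ^ 2 * P2 $$ (c i, c i)"
            using e[OF i i] by (simp add: power2_eq_square)
          then have "\<theta>1 $ i ^ 2 = \<theta>2 $ i ^ 2 * (P2 $$ (c i, c i) / P1 $$ (c i, c i))"
          proof -
            have "P1 $$ (c i, c i) > 0" using d1 ci by auto
            with \<open>\<theta>1 $ i ^ 2 * P1 $$ (c i, c i) = \<theta>2 $ i ^ 2 * P2 $$ (c i, c i)\<close> show ?thesis
              by (simp add: field_simps)
          qed
          then have "sqrt (\<theta>1 $ i ^ 2) = sqrt (\<theta>2 $ i ^ 2) * v (c i)"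
            unfolding v_def by (metis real_sqrt_mult)
          then show ?thesis using p1(2)[OF i] p2(2)[OF i] by simp
        qed
        have Pv: "P2 $$ (k,l) = v k * v l * P1 $$ (k,l)" if k: "k < K" and l: "l < K" for k l
        proof -
          obtain i where i: "i < n" "c i = k" using rep k by blast
          obtain j where j: "j < n" "c j = l" using rep l by blast
          have "\<theta>2 $ i * \<theta>2 $ j * P2 $$ (k,l) = \<theta>2 $ i * \<theta>2 $ j * (v k * v l * P1 $$ (k,l))"
            using e[OF i(1) j(1)] thv[OF i(1)] thv[OF j(1)] i j by (simp add: algebra_simps) metis
          moreover have "\<theta>2 $ i * \<theta>2 $ j \<noteq> 0" using p2(2)[OF i(1)] p2(2)[OF j(1)] by simp
          ultimately show ?thesis by simp
        qed
        obtain t1 where t1: "t1 > 0" "P1 *\<^sub>v hv = t1 \<cdot>\<^sub>v vec K (\<lambda>_. 1)"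
          using nm1 unfolding dcbm_normalized_def hv_def by blast
        obtain t2 where t2: "t2 > 0" "P2 *\<^sub>v hv = t2 \<cdot>\<^sub>v vec K (\<lambda>_. 1)"
          using nm2 unfolding dcbm_normalized_def hv_def by blast
        have r1: "\<forall>k<K. (\<Sum>l<K. P1 $$ (k,l) * h l) = t1" using rows_of[OF t1(2) p1(3)] .
        have r2: "\<forall>k<K. (\<Sum>l<K. P2 $$ (k,l) * h l) = t2" using rows_of[OF t2(2) p2(3)] .
        have veq: "\<forall>k<K. v k * (\<Sum>l<K. P1 $$ (k,l) * h l * v l) = t2"
        proof (intro allI impI)
          fix k assume k: "k < K"
          have "v k * (\<Sum>l<K. P1 $$ (k,l) * h l * v l) = (\<Sum>l<K. P2 $$ (k,l) * h l)"
            unfolding sum_distrib_left using Pv k by (intro sum.cong) auto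
          then show "v k * (\<Sum>l<K. P1 $$ (k,l) * h l * v l) = t2" using r2 k by simp
        qed
        have vsq: "\<forall>k<K. v k ^ 2 * t1 = t2"
          using uniq_core[of K h "\<lambda>k l. P1 $$ (k,l)" t1 v t2] hpos p1(4,5) d1 t1(1) r1 vpos veq by blast
        define \<gamma> where "\<gamma> = sqrt (t2 / t1)"
        have vg: "v k = \<gamma>" if "k < K" for k
        proof -
          have "v k ^ 2 = t2 / t1" using vsq that t1(1) by (simp add: field_simps)
          then have "sqrt (v k ^ 2) = \<gamma>" by (simp add: \<gamma>_def)
          moreover have "v k > 0" using vpos that by auto
          ultimately show ?thesis by simp
        qed
        have th1: "\<theta>1 $ i = \<gamma> * \<theta>2 $ i" if "i < n" for i using thv[OF that] vg cK that by simp
        have s1: "(\<Sum>i<n. \<bar>\<theta>1 $ i\<bar>) = real n" and s2: "(\<Sum>i<n. \<bar>\<theta>2 $ i\<bar>) = real n"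
          using nm1 nm2 unfolding dcbm_normalized_def by auto
        have "(\<Sum>i<n. \<bar>\<theta>1 $ i\<bar>) = (\<Sum>i<n. \<gamma> * \<bar>\<theta>2 $ i\<bar>)"
          using th1 p1(2) p2(2) t1(1) t2(1) by (intro sum.cong) (auto simp: abs_mult \<gamma>_def)
        moreover have "(\<Sum>i<n. \<gamma> * \<bar>\<theta>2 $ i\<bar>) = \<gamma> * (\<Sum>i<n. \<bar>\<theta>2 $ i\<bar>)"
          by (simp add: sum_distrib_left)
        ultimately have "real n = \<gamma> * real n" using s1 s2 by simp
        then have g1: "\<gamma> = 1" using npos by simp
        show "\<theta>1 = \<theta>2 \<and> P1 = P2"
        proof
          show "\<theta>1 = \<theta>2" using p1(1) p2(1) th1 g1 by (intro eq_vecI) auto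
          show "P1 = P2" using p1(3) p2(3) Pv vg g1 by (intro eq_matI) auto
        qed
      qed
    qed
  qed
qed

end
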